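(* Let $\Omega\subset\mathbb R^d$ be a bounded Borel set, $f:\Omega\to[0,\infty)$ with $\int_\Omega f=1$, $p\ge1$, $x_1,\dots,x_k\in\Omega$, and $h_1,\dots,h_k:[0,1]\to[0,\infty)$ differentiable in $]0,1]$ and continuous at $0$, with $\eta_i(t)=t\,h_i(t)$ convex. Let $(A_i)_{i=1}^k$ be a partition of $\Omega$ such that for every $i$, with $c_j=\int_{A_j}f\,dx$, $$A_i=\big\{x\in\Omega:\ |x-x_i|^p+h_i(c_i)+c_ih_i'(c_i)<|x-x_j|^p+h_j(c_j)+c_jh_j'(c_j)\ \ \forall j\ne i\big\}$$ up to $f$-negligible sets. Then $(A_i)_{i=1}^k$ is the unique optimum.
   Context: A partition of $\Omega$ is a family of Borel sets pairwise disjoint up to $f$-negligible sets whose union has full $f\,dx$-measure. An optimum is a partition $(A_i)_{i=1}^k$ minimizing $\sum_{i=1}^k\int_{A_i}[|x-x_i|^p+h_i(\int_{A_i}f)]f(x)\,dx$ over all partitions of $\Omega$ into $k$ sets. "Differentiable in $]0,1]$" means differentiable on $]0,1[$ with a left derivative at $1$; the convention $0\cdot h_i'(0)=0$ is used. *)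

theory Defs
  imports "HOL-Analysis.Analysis"
begin

definition fmeas :: "'a::euclidean_space set \<Rightarrow> ('a \<Rightarrow> real) \<Rightarrow> 'a measure" where
  "fmeas \<Omega> f = density lborel (\<lambda>x. ennreal (indicator \<Omega> x * f x))"

text \<open>Derivative of h at c in ]0,1]: the ordinary derivative for c < 1, the left derivative at 1.
  At c = 0 the value is irrelevant since it is always multiplied by c (convention 0 h'(0) = 0).\<close>
definition hder :: "(real \<Rightarrow> real) \<Rightarrow> real \<Rightarrow> real" where
  "hder h c = (if c < 1 then deriv h c else (THE D. (h has_real_derivative D) (at_left 1)))"

definition mass :: "('a::euclidean_space \<Rightarrow> real) \<Rightarrow> 'a set \<Rightarrow> real" where
  "mass f A = (LINT x:A|lborel. f x)"

definition is_partition :: "'a::euclidean_space set \<Rightarrow> ('a \<Rightarrow> real) \<Rightarrow> nat \<Rightarrow> (nat \<Rightarrow> 'a set) \<Rightarrow> bool" where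
  "is_partition \<Omega> f k A \<longleftrightarrow>
     (\<forall>i<k. A i \<in> sets borel \<and> A i \<subseteq> \<Omega>) \<and>
     (\<forall>i<k. \<forall>j<k. i \<noteq> j \<longrightarrow> emeasure (fmeas \<Omega> f) (A i \<inter> A j) = 0) \<and>
     emeasure (fmeas \<Omega> f) (\<Omega> - (\<Union>i<k. A i)) = 0"

definition cost :: "'a::euclidean_space set \<Rightarrow> ('a \<Rightarrow> real) \<Rightarrow> real \<Rightarrow> (nat \<Rightarrow> 'a) \<Rightarrow>
    (nat \<Rightarrow> real \<Rightarrow> real) \<Rightarrow> nat \<Rightarrow> (nat \<Rightarrow> 'a set) \<Rightarrow> real" where
  "cost \<Omega> f p x h k A =
     (\<Sum>i<k. LINT y:A i|lborel. (norm (y - x i) powr p + h i (mass f (A i))) * f y)"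

definition is_optimum :: "'a::euclidean_space set \<Rightarrow> ('a \<Rightarrow> real) \<Rightarrow> real \<Rightarrow> (nat \<Rightarrow> 'a) \<Rightarrow>
    (nat \<Rightarrow> real \<Rightarrow> real) \<Rightarrow> nat \<Rightarrow> (nat \<Rightarrow> 'a set) \<Rightarrow> bool" where
  "is_optimum \<Omega> f p x h k A \<longleftrightarrow> is_partition \<Omega> f k A \<and>
     (\<forall>B. is_partition \<Omega> f k B \<longrightarrow> cost \<Omega> f p x h k A \<le> cost \<Omega> f p x h k B)"

end

theory Submission imports Defs begin

lemma left_tangent:
  fixes \<eta> :: "real \<Rightarrow> real"
  assumes cv: "convex_on {0..1} \<eta>" and d: "(\<eta> has_real_derivative D) (at_left c)"
    and c: "0 < c" "c \<le> 1" and b: "0 \<le> b" "b < c"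
  shows "\<eta> c + D * (b - c) \<le> \<eta> b"
proof -
  have lim: "((\<lambda>y. (\<eta> y - \<eta> c)/(y - c)) \<longlongrightarrow> D) (at_left c)"
    using d has_field_derivative_iff by blast
  have ev: "eventually (\<lambda>y. (\<eta> b - \<eta> c)/(b - c) \<le> (\<eta> y - \<eta> c)/(y - c)) (at_left c)"
    using eventually_at_left_real[OF b(2)]
  proof (rule eventually_mono)
    fix y assume y: "y \<in> {b<..<c}"
    define t where "t = (c - y)/(c - b)"
    have t: "0 \<le> t" "t \<le> 1" using y b unfolding t_def by (auto simp: divide_simps)
    have cb: "c - b > 0" using y by simp
    have e0: "t * (c - b) = c - y" using cb unfolding t_def by simp
    have e: "t * c - t * b = c - y" using e0 by (simp add: algebra_simps)
    have "y = (1 - t) *\<^sub>R c + t *\<^sub>R b" using e by (simp add: algebra_simps)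
    then have "\<eta> y \<le> (1-t) * \<eta> c + t * \<eta> b" using convex_onD[OF cv t] c b by auto
    then have 1: "\<eta> y - \<eta> c \<le> t * (\<eta> b - \<eta> c)" by (simp add: algebra_simps)
    have "(t * (\<eta> b - \<eta> c))/(y - c) \<le> (\<eta> y - \<eta> c)/(y - c)"
      using divide_right_mono_neg[OF 1] y by auto
    moreover have "(t * (\<eta> b - \<eta> c))/(y - c) = (\<eta> b - \<eta> c)/(b - c)"
    proof -
      have ne: "y - c \<noteq> 0" "c - b \<noteq> 0" "b - c \<noteq> 0" using y by auto
      have "t / (y - c) = 1 / (b - c)" unfolding t_def using ne
        by (simp add: divide_simps) (simp add: algebra_simps)
      then show ?thesis by (metis times_divide_eq_right mult.commute mult_1 times_divide_eq_left)
    qed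
    ultimately show "(\<eta> b - \<eta> c)/(b - c) \<le> (\<eta> y - \<eta> c)/(y - c)" by simp
  qed
  have q: "(\<eta> b - \<eta> c)/(b - c) \<le> D" by (rule tendsto_lowerbound[OF lim ev]) simp
  have "D * (b - c) \<le> ((\<eta> b - \<eta> c)/(b - c)) * (b - c)"
    using mult_right_mono_neg[OF q, of "b - c"] b by simp
  also have "\<dots> = \<eta> b - \<eta> c" using b by simp
  finally show ?thesis by simp
qed

lemma h0_le:
  fixes h :: "real \<Rightarrow> real"
  assumes cv: "convex_on {0..1} (\<lambda>t. t * h t)" and hc: "continuous (at_right 0) h"
    and b: "0 < b" "b \<le> 1"
  shows "h 0 \<le> h b"
proof -
  have lim: "(h \<longlongrightarrow> h 0) (at_right 0)" using hc continuous_within by blast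
  have ev: "eventually (\<lambda>t. h t \<le> h b) (at_right 0)"
    using eventually_at_right_real[OF b(1)]
  proof (rule eventually_mono)
    fix t assume t: "t \<in> {0<..<b}"
    define s where "s = t / b"
    have s: "0 \<le> s" "s \<le> 1" using t b unfolding s_def by auto
    have "t = (1 - s) *\<^sub>R 0 + s *\<^sub>R b" using b unfolding s_def by simp
    then have "t * h t \<le> (1 - s) * (0 * h 0) + s * (b * h b)"
      using convex_onD[OF cv s, of 0 b] b by auto
    also have "\<dots> = t * h b" using b unfolding s_def by simp
    finally show "h t \<le> h b" using t by simp
  qed
  show ?thesis by (rule tendsto_upperbound[OF lim ev]) simp
qed

lemma tangent:
  fixes h :: "real \<Rightarrow> real"
  assumes cv: "convex_on {0..1} (\<lambda>t. t * h t)" and hc: "continuous (at_right 0) h"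
   and hd: "\<forall>t\<in>{0<..<1}. h differentiable (at t)" and hd1: "\<exists>D. (h has_real_derivative D) (at_left 1)"
   and c: "0 \<le> c" "c \<le> 1" and b: "0 \<le> b" "b \<le> 1"
  shows "c * h c + (h c + c * hder h c) * (b - c) \<le> b * h b"
proof -
  consider "c = 0" | "0 < c \<and> c < 1" | "c = 1" using c by linarith
  then show ?thesis
  proof cases
    case 1
    show ?thesis
    proof (cases "b = 0")
      case True then show ?thesis using 1 by simp
    next
      case False
      then have "h 0 \<le> h b" using h0_le[OF cv hc] b by auto
      then show ?thesis using 1 b by (simp add: mult_left_mono mult.commute)
    qed
  next
    case 2
    then have "DERIV h c :> deriv h c" using hd DERIV_deriv_iff_real_differentiable by auto
    then have "((\<lambda>t. t * h t) has_real_derivative (h c + c * deriv h c)) (at c)"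
      by (auto intro!: derivative_eq_intros)
    then have d: "((\<lambda>t. t * h t) has_real_derivative (h c + c * deriv h c)) (at c within {0..1})"
      by (rule has_field_derivative_at_within)
    have "(h c + c * deriv h c) * (b - c) \<le> b * h b - c * h c"
      using convex_on_imp_above_tangent[OF cv _ _ _ d] 2 b by auto
    then show ?thesis using 2 by (simp add: hder_def algebra_simps)
  next
    case 3
    obtain D where D: "(h has_real_derivative D) (at_left 1)" using hd1 by blast
    have "hder h 1 = D" unfolding hder_def
      apply simp
      apply (rule the_equality[where P="\<lambda>D. (h has_real_derivative D) (at_left 1)", OF D])
      using has_field_derivative_unique[OF _ D] by auto
    have d: "((\<lambda>t. t * h t) has_real_derivative (h 1 + 1 * D)) (at_left 1)"
      using D by (auto intro!: derivative_eq_intros)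
    show ?thesis
    proof (cases "b = 1")
      case True then show ?thesis using 3 by simp
    next
      case False
      then show ?thesis using left_tangent[OF cv d, of b] b 3 \<open>hder h 1 = D\<close>
        by (simp add: algebra_simps)
    qed
  qed
qed

theorem proposition3p7:
  fixes \<Omega> :: "'a::euclidean_space set" and f :: "'a \<Rightarrow> real" and p :: real
    and k :: nat and x :: "nat \<Rightarrow> 'a" and h :: "nat \<Rightarrow> real \<Rightarrow> real" and A :: "nat \<Rightarrow> 'a set"
  assumes \<Omega>_borel: "\<Omega> \<in> sets borel" and \<Omega>_bdd: "bounded \<Omega>"
    and f_nonneg: "\<forall>y\<in>\<Omega>. f y \<ge> 0"
    and f_int: "set_integrable lborel \<Omega> f" and f_one: "(LINT y:\<Omega>|lborel. f y) = 1"
    and p: "p \<ge> 1"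
    and x_in: "\<forall>i<k. x i \<in> \<Omega>"
    and h_nonneg: "\<forall>i<k. \<forall>t\<in>{0..1}. h i t \<ge> 0"
    and h_diff: "\<forall>i<k. \<forall>t\<in>{0<..<1}. h i differentiable (at t)"
    and h_diff1: "\<forall>i<k. \<exists>D. (h i has_real_derivative D) (at_left 1)"
    and h_cont0: "\<forall>i<k. continuous (at_right 0) (h i)"
    and eta_convex: "\<forall>i<k. convex_on {0..1} (\<lambda>t. t * h i t)"
    and A_part: "is_partition \<Omega> f k A"
    and A_char: "\<forall>i<k. emeasure (fmeas \<Omega> f)
        (sym_diff (A i) {y \<in> \<Omega>. \<forall>j<k. j \<noteq> i \<longrightarrow>
            norm (y - x i) powr p + h i (mass f (A i)) + mass f (A i) * hder (h i) (mass f (A i))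
          < norm (y - x j) powr p + h j (mass f (A j)) + mass f (A j) * hder (h j) (mass f (A j))}) = 0"
  shows "is_optimum \<Omega> f p x h k A \<and>
    (\<forall>B. is_optimum \<Omega> f p x h k B \<longrightarrow>
       (\<forall>i<k. emeasure (fmeas \<Omega> f) (sym_diff (A i) (B i)) = 0))"
proof -
  define w where "w = (\<lambda>y. indicator \<Omega> y * f y)"
  define M where "M = fmeas \<Omega> f"
  have [measurable]: "\<Omega> \<in> sets borel" by (rule \<Omega>_borel)
  have w_nn: "\<And>y. 0 \<le> w y" using f_nonneg by (simp add: w_def indicator_def)
  have w_int: "integrable lborel w" using f_int by (simp add: set_integrable_def w_def)
  have w_meas[measurable]: "w \<in> borel_measurable borel"
    using borel_measurable_integrable[OF w_int] by simp
  have w_one: "integral\<^sup>L lborel w = 1" using f_one by (simp add: set_lebesgue_integral_def w_def)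
  have w_Om: "\<And>y. w y \<noteq> 0 \<Longrightarrow> y \<in> \<Omega>" by (auto simp: w_def indicator_def)
  have dens: "M = density lborel (\<lambda>y. ennreal (w y))" by (simp add: M_def fmeas_def w_def)
  have null: "emeasure M S = 0 \<longleftrightarrow> (AE y in lborel. y \<in> S \<longrightarrow> w y = 0)"
    if S[measurable]: "S \<in> sets borel" for S
  proof -
    have "emeasure M S = (\<integral>\<^sup>+ y. ennreal (w y) * indicator S y \<partial>lborel)"
      unfolding dens by (rule emeasure_density) auto
    also have "\<dots> = 0 \<longleftrightarrow> (AE y in lborel. ennreal (w y) * indicator S y = 0)"
      by (rule nn_integral_0_iff_AE) simp
    also have "(\<lambda>y. ennreal (w y) * indicator S y = 0) = (\<lambda>y. y \<in> S \<longrightarrow> w y = 0)"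
      using w_nn by (auto simp: indicator_def fun_eq_iff ennreal_eq_0_iff intro: antisym)
    finally show ?thesis .
  qed
  have part_ae: "AE y in lborel. w y \<noteq> 0 \<longrightarrow> (\<exists>j<k. y \<in> B j) \<and> (\<forall>i<k. \<forall>j<k. i \<noteq> j \<longrightarrow> \<not> (y \<in> B i \<and> y \<in> B j))"
    if P: "is_partition \<Omega> f k B" for B
  proof -
    have Bb: "\<And>i. i < k \<Longrightarrow> B i \<in> sets borel" using P by (simp add: is_partition_def)
    have 1: "AE y in lborel. \<forall>i\<in>{..<k}. \<forall>j\<in>{..<k}. i \<noteq> j \<longrightarrow> y \<in> B i \<inter> B j \<longrightarrow> w y = 0"
    proof (intro eventually_ball_finite ballI finite_lessThan)
      fix i j assume ij: "i \<in> {..<k}" "j \<in> {..<k}"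
      show "AE y in lborel. i \<noteq> j \<longrightarrow> y \<in> B i \<inter> B j \<longrightarrow> w y = 0"
      proof (cases "i = j")
        case False
        have "emeasure M (B i \<inter> B j) = 0" using P ij False by (simp add: is_partition_def M_def)
        then have "AE y in lborel. y \<in> B i \<inter> B j \<longrightarrow> w y = 0"
          using null[of "B i \<inter> B j"] Bb ij by auto
        then show ?thesis by auto
      qed simp
    qed
    have m2: "\<Omega> - (\<Union>i<k. B i) \<in> sets borel" using Bb by (intro sets.Diff sets.finite_UN) auto
    have "emeasure M (\<Omega> - (\<Union>i<k. B i)) = 0" using P by (simp add: is_partition_def M_def)
    then have 2: "AE y in lborel. y \<in> \<Omega> - (\<Union>i<k. B i) \<longrightarrow> w y = 0" using null[OF m2] by simp
    show ?thesis using 1 2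
    proof eventually_elim
      case (elim y)
      then show ?case using w_Om[of y] by auto
    qed
  qed

  define \<phi> where "\<phi> = (\<lambda>i y. norm (y - x i) powr p)"
  define c where "c = (\<lambda>i. mass f (A i))"
  define g where "g = (\<lambda>i. h i (c i) + c i * hder (h i) (c i))"
  define \<Phi> where "\<Phi> = (\<lambda>i y. \<phi> i y + g i)"
  define S where "S = (\<lambda>i. {y \<in> \<Omega>. \<forall>j<k. j \<noteq> i \<longrightarrow> \<Phi> i y < \<Phi> j y})"
  have \<phi>_meas[measurable]: "\<And>i. \<phi> i \<in> borel_measurable borel" unfolding \<phi>_def by measurable
  have \<Phi>_meas[measurable]: "\<And>i. \<Phi> i \<in> borel_measurable borel" unfolding \<Phi>_def by measurable
  have S_meas: "\<And>i. S i \<in> sets borel" unfolding S_def by measurable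
  have A_char': "\<And>i. i < k \<Longrightarrow> emeasure M (sym_diff (A i) (S i)) = 0"
    using A_char unfolding S_def \<Phi>_def \<phi>_def g_def c_def M_def by (simp add: add.assoc)
  obtain R where R: "\<And>y. y \<in> \<Omega> \<Longrightarrow> norm y \<le> R" using \<Omega>_bdd bounded_iff by blast
  have \<phi>_bd: "\<bar>\<phi> i y\<bar> \<le> (2*R) powr p" if "i < k" "y \<in> \<Omega>" for i y
  proof -
    have "norm (y - x i) \<le> norm y + norm (x i)" by (rule norm_triangle_ineq4)
    also have "\<dots> \<le> 2 * R" using R[of y] R[of "x i"] x_in that by auto
    finally have "norm (y - x i) powr p \<le> (2*R) powr p" using p by (intro powr_mono2) auto
    then show ?thesis by (simp add: \<phi>_def)
  qed
  have intg: "integrable lborel (\<lambda>y. u y * w y)"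
    if u[measurable]: "u \<in> borel_measurable borel" and C: "\<And>y. y \<in> \<Omega> \<Longrightarrow> \<bar>u y\<bar> \<le> C" for u C
  proof (rule Bochner_Integration.integrable_bound[where f="\<lambda>y. C * w y"])
    show "integrable lborel (\<lambda>y. C * w y)" using w_int by simp
    show "(\<lambda>y. u y * w y) \<in> borel_measurable lborel" by simp
    show "AE y in lborel. norm (u y * w y) \<le> norm (C * w y)"
    proof (rule AE_I2)
      fix y
      show "norm (u y * w y) \<le> norm (C * w y)"
      proof (cases "w y = 0")
        case False
        then have "\<bar>u y\<bar> * w y \<le> C * w y" using C[OF w_Om[OF False]] w_nn[of y] by (intro mult_right_mono) auto
        then show ?thesis using w_nn[of y] by (simp add: abs_mult) (meson abs_ge_self mult_right_mono order_trans)
      qed simp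
    qed
  qed
  have mass_eq: "mass f T = integral\<^sup>L lborel (\<lambda>y. indicator T y * w y)" if "T \<subseteq> \<Omega>" for T
    unfolding mass_def set_lebesgue_integral_def using that
    by (intro Bochner_Integration.integral_cong) (auto simp: w_def indicator_def)
  have ind_int: "integrable lborel (\<lambda>y. indicator T y * w y)" if "T \<in> sets borel" for T
    using that by (intro intg[of _ 1]) (auto simp: indicator_def)
  have mass_bd: "0 \<le> mass f T \<and> mass f T \<le> 1" if "T \<in> sets borel" "T \<subseteq> \<Omega>" for T
  proof -
    have "integral\<^sup>L lborel (\<lambda>y. indicator T y * w y) \<le> integral\<^sup>L lborel w"
      using ind_int[OF that(1)] w_int w_nn by (intro integral_mono) (auto simp: indicator_def)
    moreover have "0 \<le> integral\<^sup>L lborel (\<lambda>y. indicator T y * w y)"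
      using w_nn by (intro Bochner_Integration.integral_nonneg) (auto simp: indicator_def)
    ultimately show ?thesis using mass_eq[OF that(2)] w_one by simp
  qed
  have phi_int: "integrable lborel (\<lambda>y. indicator T y * \<phi> i y * w y)" if "T \<in> sets borel" "i < k" for T i
  proof -
    have [measurable]: "T \<in> sets borel" by fact
    have "integrable lborel (\<lambda>y. (indicator T y * \<phi> i y) * w y)"
      using \<phi>_bd[OF that(2)] by (intro intg[of _ "(2*R) powr p"]) (auto simp: indicator_def)
    then show ?thesis by simp
  qed
  have int_split: "integral\<^sup>L lborel (\<lambda>y. indicator T y * (\<phi> i y + a) * w y)
      = integral\<^sup>L lborel (\<lambda>y. indicator T y * \<phi> i y * w y) + a * mass f T"
    if "T \<in> sets borel" "T \<subseteq> \<Omega>" "i < k" for T i a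
  proof -
    have "integral\<^sup>L lborel (\<lambda>y. indicator T y * (\<phi> i y + a) * w y)
       = integral\<^sup>L lborel (\<lambda>y. indicator T y * \<phi> i y * w y + a * (indicator T y * w y))"
      by (simp add: algebra_simps)
    also have "\<dots> = integral\<^sup>L lborel (\<lambda>y. indicator T y * \<phi> i y * w y) + a * integral\<^sup>L lborel (\<lambda>y. indicator T y * w y)"
      using phi_int[OF that(1,3)] ind_int[OF that(1)] by simp
    finally show ?thesis using mass_eq[OF that(2)] by simp
  qed
  have cost_eq: "cost \<Omega> f p x h k B = (\<Sum>i<k. integral\<^sup>L lborel (\<lambda>y. indicator (B i) y * \<phi> i y * w y) + h i (mass f (B i)) * mass f (B i))"
    if P: "is_partition \<Omega> f k B" for B
    unfolding cost_def
  proof (rule sum.cong[OF refl])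
    fix i assume i: "i \<in> {..<k}"
    have Bi: "B i \<in> sets borel" "B i \<subseteq> \<Omega>" using P i by (auto simp: is_partition_def)
    have "(LINT y:B i|lborel. (norm (y - x i) powr p + h i (mass f (B i))) * f y)
      = integral\<^sup>L lborel (\<lambda>y. indicator (B i) y * (\<phi> i y + h i (mass f (B i))) * w y)"
      unfolding set_lebesgue_integral_def using Bi(2)
      by (intro Bochner_Integration.integral_cong) (auto simp: w_def indicator_def \<phi>_def)
    also have "\<dots> = integral\<^sup>L lborel (\<lambda>y. indicator (B i) y * \<phi> i y * w y) + h i (mass f (B i)) * mass f (B i)"
      using int_split[OF Bi] i by simp
    finally show "(LINT y:B i|lborel. (norm (y - x i) powr p + h i (mass f (B i))) * f y) = \<dots>" .
  qed

  define K where "K = (\<Sum>i<k. c i * h i (c i) - g i * c i)"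
  define W where "W = (\<lambda>B y. \<Sum>i<k. indicator (B i) y * \<Phi> i y * w y)"
  define V where "V = (\<lambda>B y. \<Sum>i<k. indicator (B i) y * \<Phi> i y)"
  define T where "T = (\<lambda>B. \<Sum>i<k. integral\<^sup>L lborel (\<lambda>y. indicator (B i) y * \<Phi> i y * w y))"
  have WV: "W B y = V B y * w y" for B y by (simp only: W_def V_def sum_distrib_right)
  have Phi_int: "integrable lborel (\<lambda>y. indicator (B i) y * \<Phi> i y * w y)"
    if P: "is_partition \<Omega> f k B" and i: "i < k" for B i
  proof -
    have Bi: "B i \<in> sets borel" "B i \<subseteq> \<Omega>" using P i by (auto simp: is_partition_def)
    have "integrable lborel (\<lambda>y. indicator (B i) y * \<phi> i y * w y + g i * (indicator (B i) y * w y))"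
      using phi_int[OF Bi(1) i] ind_int[OF Bi(1)] by simp
    then show ?thesis by (simp add: \<Phi>_def algebra_simps)
  qed
  have W_int: "integrable lborel (W B)" if P: "is_partition \<Omega> f k B" for B
    unfolding W_def using Phi_int[OF P] by (intro Bochner_Integration.integrable_sum) auto
  have TW: "T B = integral\<^sup>L lborel (W B)" if P: "is_partition \<Omega> f k B" for B
    unfolding W_def T_def using Phi_int[OF P] by (subst Bochner_Integration.integral_sum) auto
  have term_eq: "integral\<^sup>L lborel (\<lambda>y. indicator (B i) y * \<Phi> i y * w y)
      = integral\<^sup>L lborel (\<lambda>y. indicator (B i) y * \<phi> i y * w y) + g i * mass f (B i)"
    if P: "is_partition \<Omega> f k B" and i: "i < k" for B i
  proof -
    have Bi: "B i \<in> sets borel" "B i \<subseteq> \<Omega>" using P i by (auto simp: is_partition_def)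
    show ?thesis using int_split[OF Bi i, of "g i"] by (simp add: \<Phi>_def)
  qed
  have c_bd: "0 \<le> c i \<and> c i \<le> 1" if "i < k" for i
    using mass_bd A_part that unfolding c_def is_partition_def by auto
  have C1: "T B + K \<le> cost \<Omega> f p x h k B" if P: "is_partition \<Omega> f k B" for B
  proof -
    have "T B + K = (\<Sum>i<k. integral\<^sup>L lborel (\<lambda>y. indicator (B i) y * \<Phi> i y * w y) + (c i * h i (c i) - g i * c i))"
      by (simp add: T_def K_def sum.distrib)
    also have "\<dots> = (\<Sum>i<k. integral\<^sup>L lborel (\<lambda>y. indicator (B i) y * \<phi> i y * w y)
         + (c i * h i (c i) + (h i (c i) + c i * hder (h i) (c i)) * (mass f (B i) - c i)))"
      by (rule sum.cong[OF refl], subst term_eq[OF P], simp, simp add: g_def algebra_simps)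
    also have "\<dots> \<le> (\<Sum>i<k. integral\<^sup>L lborel (\<lambda>y. indicator (B i) y * \<phi> i y * w y)
         + mass f (B i) * h i (mass f (B i)))"
    proof (rule sum_mono)
      fix i assume i: "i \<in> {..<k}"
      have Bi: "B i \<in> sets borel" "B i \<subseteq> \<Omega>" using P i by (auto simp: is_partition_def)
      have "c i * h i (c i) + (h i (c i) + c i * hder (h i) (c i)) * (mass f (B i) - c i)
          \<le> mass f (B i) * h i (mass f (B i))"
        using tangent[of "h i" "c i" "mass f (B i)"] eta_convex h_cont0 h_diff h_diff1 i c_bd[of i] mass_bd[OF Bi]
        by auto
      then show "integral\<^sup>L lborel (\<lambda>y. indicator (B i) y * \<phi> i y * w y)
         + (c i * h i (c i) + (h i (c i) + c i * hder (h i) (c i)) * (mass f (B i) - c i))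
         \<le> integral\<^sup>L lborel (\<lambda>y. indicator (B i) y * \<phi> i y * w y) + mass f (B i) * h i (mass f (B i))"
        by simp
    qed
    also have "\<dots> = cost \<Omega> f p x h k B" using cost_eq[OF P] by (simp add: mult.commute)
    finally show ?thesis .
  qed
  have C2: "cost \<Omega> f p x h k A = T A + K"
  proof -
    have "T A + K = (\<Sum>i<k. integral\<^sup>L lborel (\<lambda>y. indicator (A i) y * \<Phi> i y * w y) + (c i * h i (c i) - g i * c i))"
      by (simp add: T_def K_def sum.distrib)
    also have "\<dots> = (\<Sum>i<k. integral\<^sup>L lborel (\<lambda>y. indicator (A i) y * \<phi> i y * w y)
         + h i (mass f (A i)) * mass f (A i))"
      by (rule sum.cong[OF refl], subst term_eq[OF A_part], simp, simp add: c_def algebra_simps)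
    finally show ?thesis using cost_eq[OF A_part] by simp
  qed

  have sum1: "V B y = \<Phi> j y" if "j < k" "y \<in> B j" "\<forall>i<k. i \<noteq> j \<longrightarrow> y \<notin> B i" for B j y
  proof -
    have "V B y = (\<Sum>i<k. if i = j then \<Phi> j y else 0)"
      unfolding V_def using that by (intro sum.cong) (auto simp: indicator_def)
    also have "\<dots> = \<Phi> j y" using that(1) by (simp add: sum.delta)
    finally show ?thesis .
  qed
  have AS: "AE y in lborel. w y \<noteq> 0 \<longrightarrow> (\<forall>i\<in>{..<k}. y \<in> A i \<longleftrightarrow> y \<in> S i)"
  proof -
    have "AE y in lborel. \<forall>i\<in>{..<k}. y \<in> sym_diff (A i) (S i) \<longrightarrow> w y = 0"
    proof (intro eventually_ball_finite ballI finite_lessThan)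
      fix i assume i: "i \<in> {..<k}"
      have "sym_diff (A i) (S i) \<in> sets borel"
        using A_part i S_meas[of i] by (auto simp: is_partition_def)
      then show "AE y in lborel. y \<in> sym_diff (A i) (S i) \<longrightarrow> w y = 0"
        using null A_char' i by (metis lessThan_iff)
    qed
    then show ?thesis by eventually_elim auto
  qed
  have pt: "AE y in lborel. w y \<noteq> 0 \<longrightarrow> V A y \<le> V B y \<and> (V A y = V B y \<longrightarrow> (\<forall>i<k. y \<in> A i \<longleftrightarrow> y \<in> B i))"
    if P: "is_partition \<Omega> f k B" for B
    using part_ae[OF A_part] part_ae[OF P] AS
  proof eventually_elim
    case (elim y)
    show ?case
    proof
      assume wy: "w y \<noteq> 0"
      obtain a where a: "a < k" "y \<in> A a" using elim wy by auto
      obtain b where b: "b < k" "y \<in> B b" using elim wy by auto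
      have a': "\<forall>i<k. i \<noteq> a \<longrightarrow> y \<notin> A i" using elim wy a by auto
      have b': "\<forall>i<k. i \<noteq> b \<longrightarrow> y \<notin> B i" using elim wy b by auto
      have VA: "V A y = \<Phi> a y" by (rule sum1[OF a a'])
      have VB: "V B y = \<Phi> b y" by (rule sum1[OF b b'])
      have yS: "y \<in> S a" using elim wy a by auto
      show "V A y \<le> V B y \<and> (V A y = V B y \<longrightarrow> (\<forall>i<k. y \<in> A i \<longleftrightarrow> y \<in> B i))"
      proof (cases "a = b")
        case True
        then show ?thesis using VA VB a a' b b' by auto
      next
        case False
        then have "\<Phi> a y < \<Phi> b y" using yS b unfolding S_def by auto
        then show ?thesis using VA VB by auto
      qed
    qed
  qed
  have C3: "T A \<le> T B" if P: "is_partition \<Omega> f k B" for B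
  proof -
    have "integral\<^sup>L lborel (W A) \<le> integral\<^sup>L lborel (W B)"
    proof (rule integral_mono_AE[OF W_int[OF A_part] W_int[OF P]])
      show "AE y in lborel. W A y \<le> W B y"
        using pt[OF P]
      proof eventually_elim
        case (elim y)
        then show ?case using w_nn[of y] unfolding WV by (cases "w y = 0") (auto intro: mult_right_mono)
      qed
    qed
    then show ?thesis using TW[OF P] TW[OF A_part] by simp
  qed
  have C4: "emeasure M (sym_diff (A i) (B i)) = 0"
    if P: "is_partition \<Omega> f k B" and eq: "T B \<le> T A" and i: "i < k" for B i
  proof -
    have "integral\<^sup>L lborel (\<lambda>y. W B y - W A y) = T B - T A"
      using TW[OF P] TW[OF A_part] W_int[OF P] W_int[OF A_part] by simp
    also have "\<dots> = 0" using eq C3[OF P] by simp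
    finally have z: "integral\<^sup>L lborel (\<lambda>y. W B y - W A y) = 0" .
    have nn: "AE y in lborel. 0 \<le> W B y - W A y"
      using pt[OF P]
    proof eventually_elim
      case (elim y)
      then show ?case using w_nn[of y] unfolding WV by (cases "w y = 0") (auto intro: mult_right_mono)
    qed
    have "AE y in lborel. W B y - W A y = 0"
      using z integral_nonneg_eq_0_iff_AE[OF _ nn] W_int[OF P] W_int[OF A_part] by auto
    then have "AE y in lborel. y \<in> sym_diff (A i) (B i) \<longrightarrow> w y = 0"
      using pt[OF P]
    proof eventually_elim
      case (elim y)
      show ?case
      proof (cases "w y = 0")
        case False
        then have "V A y = V B y" using elim unfolding WV by (simp add: algebra_simps)
        then show ?thesis using elim False i by auto
      qed simp
    qed
    moreover have "sym_diff (A i) (B i) \<in> sets borel"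
      using A_part P i unfolding is_partition_def by (intro sets.Un sets.Diff) auto
    ultimately show ?thesis using null by metis
  qed
  show ?thesis
  proof
    show opt: "is_optimum \<Omega> f p x h k A"
      unfolding is_optimum_def
    proof (intro conjI allI impI A_part)
      fix B assume P: "is_partition \<Omega> f k B"
      show "cost \<Omega> f p x h k A \<le> cost \<Omega> f p x h k B" using C1[OF P] C2 C3[OF P] by linarith
    qed
    show "\<forall>B. is_optimum \<Omega> f p x h k B \<longrightarrow> (\<forall>i<k. emeasure (fmeas \<Omega> f) (sym_diff (A i) (B i)) = 0)"
    proof (intro allI impI)
      fix B i assume oB: "is_optimum \<Omega> f p x h k B" and i: "i < k"
      have P: "is_partition \<Omega> f k B" using oB by (simp add: is_optimum_def)
      have "cost \<Omega> f p x h k B \<le> cost \<Omega> f p x h k A" using oB A_part by (simp add: is_optimum_def)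
      then have "T B \<le> T A" using C1[OF P] C2 by simp
      then show "emeasure (fmeas \<Omega> f) (sym_diff (A i) (B i)) = 0" using C4[OF P _ i] by (simp add: M_def)
    qed
  qed

qed
end
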